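(* For each $\rho>2$, the operator $f\mapsto\|H_tf(x)\|_{v(\rho),[1,\infty)}$ (variation in $t\in[1,\infty)$) is of weak type $(1,1)$ with respect to $\gamma_\infty$. More strongly, there is a constant $C$ such that for every $f\in L^1(\gamma_\infty)$ with $\|f\|_{L^1(\gamma_\infty)}=1$, \[\gamma_\infty\bigl\{x\in\mathbb R:\ \|H_tf(x)\|_{v(\rho),[1,\infty)}>\alpha\bigr\}\le\frac{C}{\alpha\sqrt{\log\alpha}},\qquad\alpha>2.\]
   Context: $R(x)=x^2/2$, $d\gamma_\infty(u)=(2\pi)^{-1/2}e^{-R(u)}du$ on $\mathbb R$. $K_t(x,u)=\frac{e^{R(x)}}{\sqrt{1-e^{-2t}}}\exp\bigl(-\frac12\frac{(e^{-t}u-x)^2}{1-e^{-2t}}\bigr)$ and $H_tf(x)=\int f(u)K_t(x,u)\,d\gamma_\infty(u)$ for $f\in L^1(\gamma_\infty)$, $t>0$. For $1\le\rho<\infty$ and an interval $I$, $\|\phi\|_{v(\rho),I}=\sup(\sum_{i=1}^n|\phi(t_i)-\phi(t_{i-1})|^\rho)^{1/\rho}$ over finite increasing sequences $t_0<\dots<t_n$ in $I$. *)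

theory Defs
  imports "HOL-Analysis.Analysis"
begin

definition R :: "real \<Rightarrow> real" where
  "R x = x^2 / 2"

definition gamma_inf :: "real measure" where
  "gamma_inf = density lborel (\<lambda>u. ennreal ((2 * pi) powr (-1/2) * exp (- R u)))"

definition K :: "real \<Rightarrow> real \<Rightarrow> real \<Rightarrow> real" where
  "K t x u = exp (R x) / sqrt (1 - exp (-2 * t)) *
      exp (- (1/2) * (exp (-t) * u - x)^2 / (1 - exp (-2 * t)))"

definition H :: "real \<Rightarrow> (real \<Rightarrow> real) \<Rightarrow> real \<Rightarrow> real" where
  "H t f x = (\<integral>u. f u * K t x u \<partial>gamma_inf)"

definition var_norm :: "real \<Rightarrow> real set \<Rightarrow> (real \<Rightarrow> real) \<Rightarrow> ereal" where
  "var_norm \<rho> I \<phi> =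
     (SUP p \<in> {(n, t). (\<forall>i\<le>n. t i \<in> I) \<and> (\<forall>i<n. t i < t (Suc i))}.
        ereal ((\<Sum>i\<in>{1..fst p}. \<bar>\<phi> (snd p i) - \<phi> (snd p (i - 1))\<bar> powr \<rho>) powr (1 / \<rho>)))"

end

theory Submission
  imports Defs "HOL-Probability.Distributions" "HOL-Real_Asymp.Real_Asymp"
begin



definition monoe :: "real set \<Rightarrow> (real \<Rightarrow> real) \<Rightarrow> bool" where
  "monoe S g \<longleftrightarrow> (\<forall>a\<in>S. \<forall>b\<in>S. a \<le> b \<longrightarrow> g a \<le> g b) \<or> (\<forall>a\<in>S. \<forall>b\<in>S. a \<le> b \<longrightarrow> g b \<le> g a)"

lemma tv_mono_eq:
  fixes g :: "real \<Rightarrow> real" and t :: "nat \<Rightarrow> real"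
  assumes mono: "\<forall>a\<in>S. \<forall>b\<in>S. a \<le> b \<longrightarrow> g a \<le> g b"
    and tS: "\<forall>i\<le>n. t i \<in> S" and inc: "\<forall>i<n. t i < t (Suc i)"
  shows "(\<Sum>i\<in>{1..n}. \<bar>g (t i) - g (t (i-1))\<bar>) = g (t n) - g (t 0)"
  using tS inc
proof (induction n)
  case 0
  then show ?case by simp
next
  case (Suc n)
  have IH: "(\<Sum>i\<in>{1..n}. \<bar>g (t i) - g (t (i-1))\<bar>) = g (t n) - g (t 0)"
    using Suc by auto
  have "g (t n) \<le> g (t (Suc n))"
    using mono Suc.prems by (metis le_SucI less_Suc_eq_le less_imp_le order_refl)
  then show ?case using IH by (simp add: sum.cl_ivl_Suc)
qed

lemma tv_monoe:
  fixes g :: "real \<Rightarrow> real" and t :: "nat \<Rightarrow> real"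
  assumes m: "monoe S g" and b: "\<forall>a\<in>S. 0 \<le> g a \<and> g a \<le> 1"
    and tS: "\<forall>i\<le>n. t i \<in> S" and inc: "\<forall>i<n. t i < t (Suc i)"
  shows "(\<Sum>i\<in>{1..n}. \<bar>g (t i) - g (t (i-1))\<bar>) \<le> 1"
proof -
  have t0: "t 0 \<in> S" "t n \<in> S" using tS by auto
  show ?thesis
  proof (cases "\<forall>a\<in>S. \<forall>b\<in>S. a \<le> b \<longrightarrow> g a \<le> g b")
    case True
    have "0 \<le> g (t 0)" "g (t n) \<le> 1" using b t0 by auto
    then show ?thesis using tv_mono_eq[OF True tS inc] by linarith
  next
    case False
    then have mm: "\<forall>a\<in>S. \<forall>b\<in>S. a \<le> b \<longrightarrow> (\<lambda>x. - g x) a \<le> (\<lambda>x. - g x) b"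
      using m unfolding monoe_def by auto
    have "(\<Sum>i\<in>{1..n}. \<bar>g (t i) - g (t (i-1))\<bar>) = (\<Sum>i\<in>{1..n}. \<bar>(- g (t i)) - (- g (t (i-1)))\<bar>)"
      by (intro sum.cong) auto
    also have "\<dots> = - g (t n) + g (t 0)" using tv_mono_eq[OF mm tS inc] by simp
    moreover have "g (t 0) \<le> 1" "0 \<le> g (t n)" using b t0 by auto
    ultimately show ?thesis by linarith
  qed
qed

lemma tv_split:
  fixes g :: "real \<Rightarrow> real" and t :: "nat \<Rightarrow> real"
  assumes c: "1 \<le> c" and m1: "monoe {1..c} g" and m2: "monoe {c..} g"
    and b: "\<forall>a\<in>{1..}. 0 \<le> g a \<and> g a \<le> 1"
    and tS: "\<forall>i\<le>n. t i \<in> {1..}" and inc: "\<forall>i<n. t i < t (Suc i)"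
  shows "(\<Sum>i\<in>{1..n}. \<bar>g (t i) - g (t (i-1))\<bar>) \<le> 2"
proof -
  define g1 where "g1 = (\<lambda>s. g (min s c))"
  define g2 where "g2 = (\<lambda>s. g (max s c))"
  have mg1: "monoe {1..} g1"
  proof -
    have mm: "min a c \<in> {1..c}" if "a \<in> {1..}" for a using that c by auto
    have ml: "min a c \<le> min b c" if "a \<le> b" for a b using that by auto
    show ?thesis using m1[unfolded monoe_def]
    proof (elim disjE)
      assume h: "\<forall>a\<in>{1..c}. \<forall>b\<in>{1..c}. a \<le> b \<longrightarrow> g a \<le> g b"
      show ?thesis unfolding monoe_def g1_def by (intro disjI1 ballI impI) (use h mm ml in blast)
    next
      assume h: "\<forall>a\<in>{1..c}. \<forall>b\<in>{1..c}. a \<le> b \<longrightarrow> g b \<le> g a"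
      show ?thesis unfolding monoe_def g1_def by (intro disjI2 ballI impI) (use h mm ml in blast)
    qed
  qed
  have mg2: "monoe {1..} g2"
  proof -
    have mm: "max a c \<in> {c..}" for a by auto
    have ml: "max a c \<le> max b c" if "a \<le> b" for a b using that by auto
    show ?thesis using m2[unfolded monoe_def]
    proof (elim disjE)
      assume h: "\<forall>a\<in>{c..}. \<forall>b\<in>{c..}. a \<le> b \<longrightarrow> g a \<le> g b"
      show ?thesis unfolding monoe_def g2_def by (intro disjI1 ballI impI) (use h mm ml in blast)
    next
      assume h: "\<forall>a\<in>{c..}. \<forall>b\<in>{c..}. a \<le> b \<longrightarrow> g b \<le> g a"
      show ?thesis unfolding monoe_def g2_def by (intro disjI2 ballI impI) (use h mm ml in blast)
    qed
  qed
  have bg1: "\<forall>a\<in>{1..}. 0 \<le> g1 a \<and> g1 a \<le> 1" using b c unfolding g1_def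
    by (simp add: min_def)
  have bg2: "\<forall>a\<in>{1..}. 0 \<le> g2 a \<and> g2 a \<le> 1" using b c unfolding g2_def
    by (simp add: max_def)
  have dec: "g s = g1 s + g2 s - g c" for s
    unfolding g1_def g2_def by (cases "s \<le> c") (auto simp: min_def max_def)
  have "(\<Sum>i\<in>{1..n}. \<bar>g (t i) - g (t (i-1))\<bar>) \<le>
        (\<Sum>i\<in>{1..n}. \<bar>g1 (t i) - g1 (t (i-1))\<bar> + \<bar>g2 (t i) - g2 (t (i-1))\<bar>)"
  proof (intro sum_mono)
    fix i
    have e: "g (t i) - g (t (i-1)) = (g1 (t i) - g1 (t (i-1))) + (g2 (t i) - g2 (t (i-1)))"
      using dec[of "t i"] dec[of "t (i-1)"] by linarith
    show "\<bar>g (t i) - g (t (i-1))\<bar> \<le> \<bar>g1 (t i) - g1 (t (i-1))\<bar> + \<bar>g2 (t i) - g2 (t (i-1))\<bar>"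
      unfolding e by (rule abs_triangle_ineq)
  qed
  also have "\<dots> = (\<Sum>i\<in>{1..n}. \<bar>g1 (t i) - g1 (t (i-1))\<bar>) + (\<Sum>i\<in>{1..n}. \<bar>g2 (t i) - g2 (t (i-1))\<bar>)"
    by (simp add: sum.distrib)
  also have "\<dots> \<le> 1 + 1"
    using tv_monoe[OF mg1 bg1 tS inc] tv_monoe[OF mg2 bg2 tS inc] by linarith
  finally show ?thesis by simp
qed

lemma tv_prod:
  fixes A E :: "real \<Rightarrow> real" and t :: "nat \<Rightarrow> real"
  assumes bA: "\<forall>a\<in>{1..}. 1 \<le> A a \<and> A a \<le> 2" and bE: "\<forall>a\<in>{1..}. 0 \<le> E a \<and> E a \<le> 1"
    and tS: "\<forall>i\<le>n. t i \<in> {1..}"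
    and vA: "(\<Sum>i\<in>{1..n}. \<bar>A (t i) - A (t (i-1))\<bar>) \<le> 1"
    and vE: "(\<Sum>i\<in>{1..n}. \<bar>E (t i) - E (t (i-1))\<bar>) \<le> 2"
  shows "(\<Sum>i\<in>{1..n}. \<bar>A (t i) * E (t i) - A (t (i-1)) * E (t (i-1))\<bar>) \<le> 5"
proof -
  have "(\<Sum>i\<in>{1..n}. \<bar>A (t i) * E (t i) - A (t (i-1)) * E (t (i-1))\<bar>) \<le>
     (\<Sum>i\<in>{1..n}. 2 * \<bar>E (t i) - E (t (i-1))\<bar> + \<bar>A (t i) - A (t (i-1))\<bar>)"
  proof (intro sum_mono)
    fix i assume i: "i \<in> {1..n}"
    have a1: "1 \<le> A (t i) \<and> A (t i) \<le> 2" "0 \<le> E (t (i-1)) \<and> E (t (i-1)) \<le> 1"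
      using bA bE tS i by auto
    have eq: "A (t i) * E (t i) - A (t (i-1)) * E (t (i-1)) =
       A (t i) * (E (t i) - E (t (i-1))) + E (t (i-1)) * (A (t i) - A (t (i-1)))"
      by (simp add: algebra_simps)
    have "\<bar>A (t i) * (E (t i) - E (t (i-1)))\<bar> \<le> 2 * \<bar>E (t i) - E (t (i-1))\<bar>"
      using a1 by (simp add: abs_mult mult_right_mono)
    moreover have "\<bar>E (t (i-1)) * (A (t i) - A (t (i-1)))\<bar> \<le> \<bar>A (t i) - A (t (i-1))\<bar>"
      using a1 by (simp add: abs_mult mult_left_le_one_le)
    ultimately show "\<bar>A (t i) * E (t i) - A (t (i-1)) * E (t (i-1))\<bar> \<le>
        2 * \<bar>E (t i) - E (t (i-1))\<bar> + \<bar>A (t i) - A (t (i-1))\<bar>"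
      unfolding eq by linarith
  qed
  also have "\<dots> = 2 * (\<Sum>i\<in>{1..n}. \<bar>E (t i) - E (t (i-1))\<bar>) + (\<Sum>i\<in>{1..n}. \<bar>A (t i) - A (t (i-1))\<bar>)"
    by (simp add: sum.distrib sum_distrib_left)
  also have "\<dots> \<le> 5" using vA vE by linarith
  finally show ?thesis .
qed

lemma powr_sum_le:
  fixes a :: "nat \<Rightarrow> real" and \<rho> :: real
  assumes r: "1 \<le> \<rho>" and nn: "\<And>i. i \<in> I \<Longrightarrow> 0 \<le> a i" and fin: "finite I"
  shows "(\<Sum>i\<in>I. a i powr \<rho>) powr (1/\<rho>) \<le> (\<Sum>i\<in>I. a i)"
proof -
  define S where "S = (\<Sum>i\<in>I. a i)"
  have S0: "0 \<le> S" unfolding S_def using nn by (simp add: sum_nonneg)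
  have le: "a i \<le> S" if "i \<in> I" for i
    unfolding S_def using nn that fin by (intro member_le_sum) auto
  have pw: "y powr (1 + (\<rho> - 1)) = y * y powr (\<rho> - 1)" if "0 < y" for y :: real
    using that by (subst powr_add) simp
  have each: "a i powr \<rho> \<le> a i * S powr (\<rho> - 1)" if "i \<in> I" for i
  proof (cases "a i = 0")
    case True then show ?thesis by simp
  next
    case False
    then have pos: "0 < a i" using nn that by force
    have "a i powr \<rho> = a i * a i powr (\<rho> - 1)"
      using pw[OF pos] by simp
    also have "\<dots> \<le> a i * S powr (\<rho> - 1)"
      using pos le[OF that] r by (intro mult_left_mono powr_mono2) auto
    finally show ?thesis .
  qed
  have "(\<Sum>i\<in>I. a i powr \<rho>) \<le> (\<Sum>i\<in>I. a i * S powr (\<rho> - 1))"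
    using each by (intro sum_mono) auto
  also have "\<dots> = S * S powr (\<rho> - 1)" unfolding S_def by (rule sum_distrib_right[symmetric])
  also have "\<dots> = S powr \<rho>"
  proof (cases "S = 0")
    case True then show ?thesis using r by simp
  next
    case False then show ?thesis using S0 pw[of S] by simp
  qed
  finally have "(\<Sum>i\<in>I. a i powr \<rho>) powr (1/\<rho>) \<le> (S powr \<rho>) powr (1/\<rho>)"
    using r by (intro powr_mono2) (auto intro: sum_nonneg)
  also have "\<dots> = S" using r S0 by (simp add: powr_powr)
  finally show ?thesis unfolding S_def .
qed



definition G :: "real \<Rightarrow> real \<Rightarrow> real \<Rightarrow> real" where
  "G x u r = exp (- (1/2) * (r * u - x)^2 / (1 - r^2))"

lemma G_deriv:
  assumes "0 < r" "r < 1"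
  shows "(G x u has_real_derivative (- G x u r * ((r*u - x) * (u - r*x)) / (1 - r^2)^2)) (at r)"
proof -
  have d: "1 - r^2 \<noteq> 0" using assms by (simp add: power2_eq_square) (smt (verit) mult_less_cancel_left2)
  define q where "q = (\<lambda>r. (r*u - x)^2 / (1 - r^2))"
  have n: "((\<lambda>r. (r*u - x)^2) has_real_derivative (2*(r*u-x)*u)) (at r)"
    by (rule derivative_eq_intros refl | simp)+
  have dd: "((\<lambda>r. 1 - r^2) has_real_derivative (-2*r)) (at r)"
    by (rule derivative_eq_intros refl | simp)+
  have qd: "(q has_real_derivative (2*(r*u-x)*(u - r*x)/(1-r^2)^2)) (at r)"
  proof -
    have "(q has_real_derivative ((2*(r*u-x)*u) * (1 - r^2) - ((-2*r) * (r*u - x)^2)) / ((1 - r^2) ^ Suc (Suc 0))) (at r)"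
      unfolding q_def by (rule DERIV_quotient[OF n dd d])
    moreover have "(2*(r*u-x)*u) * (1 - r^2) - ((-2*r) * (r*u - x)^2) = 2*(r*u-x)*(u - r*x)"
      by (simp add: power2_eq_square algebra_simps)
    ultimately show ?thesis by (simp add: power2_eq_square)
  qed
  have Geq: "G x u = (\<lambda>r. exp (-(1/2) * q r))" unfolding G_def q_def by (rule ext) simp
  have "((\<lambda>r. exp (-(1/2) * q r)) has_real_derivative exp (-(1/2) * q r) * (-(1/2) * (2*(r*u-x)*(u - r*x)/(1-r^2)^2))) (at r)"
    by (rule DERIV_chain2[OF DERIV_exp DERIV_cmult[OF qd]])
  then show ?thesis unfolding Geq by (rule DERIV_cong) (use d in \<open>simp add: field_simps\<close>)
qed



definition kk :: "real \<Rightarrow> real \<Rightarrow> real" where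
  "kk x u = (if x*u \<le> 0 then 0 else if \<bar>x\<bar> \<le> \<bar>u\<bar> then x/u else u/x)"

lemma sign_aux:
  fixes r k v :: real
  assumes "0 < r" "r < 1" "0 \<le> k" "k \<le> 1"
  shows "k \<le> r \<Longrightarrow> 0 \<le> v^2 * (r - k) * (1 - r*k)"
    and "r \<le> k \<Longrightarrow> v^2 * (r - k) * (1 - r*k) \<le> 0"
proof -
  have "r*k \<le> r" using assms by (simp add: mult_left_le)
  then have "r*k < 1" using assms by linarith
  then have p: "0 < 1 - r*k" by simp
  show "k \<le> r \<Longrightarrow> 0 \<le> v^2 * (r - k) * (1 - r*k)" using p by simp
  show "r \<le> k \<Longrightarrow> v^2 * (r - k) * (1 - r*k) \<le> 0"
    using p by (intro mult_nonpos_nonneg mult_nonneg_nonpos) auto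
qed

lemma kk_bounds: "0 \<le> kk x u \<and> kk x u \<le> 1"
proof (cases "x*u \<le> 0")
  case True then show ?thesis by (simp add: kk_def)
next
  case False
  then have s: "0 < x*u" by simp
  show ?thesis
  proof (cases "\<bar>x\<bar> \<le> \<bar>u\<bar>")
    case True
    have "0 < x/u" using s by (simp add: zero_less_divide_iff zero_less_mult_iff)
    moreover have "x/u \<le> 1"
    proof -
      have "x/u \<le> \<bar>x\<bar>/\<bar>u\<bar>" by (metis abs_divide abs_ge_self)
      moreover have "\<bar>x\<bar>/\<bar>u\<bar> \<le> 1" using True s by (auto simp add: divide_le_eq_1)
      ultimately show ?thesis by linarith
    qed
    ultimately show ?thesis using False True by (simp add: kk_def)
  next
    case c: False
    have "0 < u/x" using s by (auto simp add: zero_less_divide_iff zero_less_mult_iff)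
    moreover have "u/x \<le> 1"
    proof -
      have "u/x \<le> \<bar>u\<bar>/\<bar>x\<bar>" by (metis abs_divide abs_ge_self)
      moreover have "\<bar>u\<bar>/\<bar>x\<bar> \<le> 1" using c s by (auto simp add: divide_le_eq_1)
      ultimately show ?thesis by linarith
    qed
    ultimately show ?thesis using False c by (simp add: kk_def)
  qed
qed

lemma kk_sign:
  assumes r: "0 < r" "r < 1"
  shows "kk x u \<le> r \<Longrightarrow> 0 \<le> (r*u - x) * (u - r*x)"
    and "r \<le> kk x u \<Longrightarrow> (r*u - x) * (u - r*x) \<le> 0"
proof -
  have kb: "0 \<le> kk x u" "kk x u \<le> 1" using kk_bounds by auto
  have main: "(kk x u \<le> r \<longrightarrow> 0 \<le> (r*u - x) * (u - r*x)) \<and> (r \<le> kk x u \<longrightarrow> (r*u - x) * (u - r*x) \<le> 0)"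
  proof (cases "x*u \<le> 0")
    case True
    have "(r*u - x) * (u - r*x) = r*(u^2 + x^2) + (-(x*u)) * (1 + r^2)"
      by (simp add: power2_eq_square algebra_simps)
    moreover have "0 \<le> r*(u^2 + x^2) + (-(x*u)) * (1 + r^2)"
      using True r by (intro add_nonneg_nonneg mult_nonneg_nonneg) auto
    ultimately show ?thesis using True r by (simp add: kk_def)
  next
    case False
    show ?thesis
    proof (cases "\<bar>x\<bar> \<le> \<bar>u\<bar>")
      case True
      define k where "k = x/u"
      have u0: "u \<noteq> 0" using False by auto
      have kdef: "kk x u = k" using False True by (simp add: kk_def k_def)
      have xk: "x = k*u" using u0 by (simp add: k_def)
      have "(r*u - x) * (u - r*x) = u^2 * (r - k) * (1 - r*k)"
        unfolding xk by (simp add: power2_eq_square algebra_simps)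
      then show ?thesis using sign_aux[OF r, of k u] kb unfolding kdef by auto
    next
      case c: False
      define k where "k = u/x"
      have x0: "x \<noteq> 0" using False by auto
      have kdef: "kk x u = k" using False c by (simp add: kk_def k_def)
      have uk: "u = k*x" using x0 by (simp add: k_def)
      have "(r*u - x) * (u - r*x) = x^2 * (r - k) * (1 - r*k)"
        unfolding uk by (simp add: power2_eq_square algebra_simps)
      then show ?thesis using sign_aux[OF r, of k x] kb unfolding kdef by auto
    qed
  qed
  show "kk x u \<le> r \<Longrightarrow> 0 \<le> (r*u - x) * (u - r*x)" using main by blast
  show "r \<le> kk x u \<Longrightarrow> (r*u - x) * (u - r*x) \<le> 0" using main by blast
qed


lemma G_pos: "0 < G x u r" by (simp add: G_def)

lemma G_dec:
  assumes "0 < a" "a \<le> b" "b < 1" "kk x u \<le> a"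
  shows "G x u b \<le> G x u a"
proof (rule DERIV_nonpos_imp_nonincreasing[OF assms(2)])
  fix r assume r: "a \<le> r" "r \<le> b"
  then have r01: "0 < r" "r < 1" using assms by auto
  have P: "0 \<le> (r*u - x) * (u - r*x)" using kk_sign(1)[OF r01] assms r by auto
  have "0 \<le> G x u r * ((r*u - x) * (u - r*x)) / (1 - r^2)^2"
    by (rule divide_nonneg_nonneg[OF mult_nonneg_nonneg[OF less_imp_le[OF G_pos] P]]) simp
  then show "\<exists>y. (G x u has_real_derivative y) (at r) \<and> y \<le> 0"
    using G_deriv[OF r01, of x u] by (intro exI[of _ "- G x u r * ((r*u - x) * (u - r*x)) / (1 - r^2)^2"]) auto
qed

lemma G_inc:
  assumes "0 < a" "a \<le> b" "b < 1" "b \<le> kk x u"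
  shows "G x u a \<le> G x u b"
proof (rule DERIV_nonneg_imp_nondecreasing[OF assms(2)])
  fix r assume r: "a \<le> r" "r \<le> b"
  then have r01: "0 < r" "r < 1" using assms by auto
  have P: "(r*u - x) * (u - r*x) \<le> 0" using kk_sign(2)[OF r01] assms r by auto
  have "G x u r * ((r*u - x) * (u - r*x)) / (1 - r^2)^2 \<le> 0"
    by (rule divide_nonpos_nonneg[OF mult_nonneg_nonpos[OF less_imp_le[OF G_pos] P]]) simp
  then show "\<exists>y. (G x u has_real_derivative y) (at r) \<and> 0 \<le> y"
    using G_deriv[OF r01, of x u] by (intro exI[of _ "- G x u r * ((r*u - x) * (u - r*x)) / (1 - r^2)^2"]) auto
qed

lemma exp2: "exp (-2 * (t::real)) = exp (-t)^2"
  by (simp add: power2_eq_square exp_add[symmetric])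

lemma E_pieces:
  fixes x u :: real
  defines "E \<equiv> \<lambda>t. exp (- (1/2) * (exp (-t) * u - x)^2 / (1 - exp (-2 * t)))"
  shows "\<exists>c\<ge>1. monoe {1..c} E \<and> monoe {c..} E"
proof -
  have Eeq: "E t = G x u (exp (-t))" for t
    unfolding E_def G_def exp2 by (simp add: mult.commute)
  have r01: "0 < exp (-t)" "exp (-t) < 1" if "1 \<le> t" for t :: real
    using that by auto
  have rle: "exp (-b) \<le> exp (-a)" if "a \<le> b" for a b :: real using that by simp
  define k where "k = kk x u"
  show ?thesis
  proof (cases "k \<le> 0")
    case True
    have m1: "monoe {1..1} E" unfolding monoe_def by auto
    have "monoe {1..} E" unfolding monoe_def
    proof (intro disjI1 ballI impI)
      fix a b :: real assume ab: "a \<in> {1..}" "b \<in> {1..}" "a \<le> b"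
      have kb: "kk x u \<le> exp (-b)" using True exp_gt_zero[of "-b"] unfolding k_def by linarith
      have "G x u (exp (-a)) \<le> G x u (exp (-b))"
        using ab r01[of a] r01[of b] kb rle[of a b]
        by (intro G_dec) auto
      then show "E a \<le> E b" unfolding Eeq .
    qed
    then show ?thesis using m1 by (intro exI[of _ 1]) auto
  next
    case False
    then have k0: "0 < k" by simp
    define c where "c = max 1 (- ln k)"
    have m1: "monoe {1..c} E" unfolding monoe_def
    proof (intro disjI1 ballI impI)
      fix a b :: real assume ab: "a \<in> {1..c}" "b \<in> {1..c}" "a \<le> b"
      show "E a \<le> E b"
      proof (cases "b \<le> 1")
        case True then have "a = b" using ab by auto
        then show ?thesis by simp
      next
        case b1: False
        then have "b \<le> - ln k" using ab unfolding c_def by auto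
        then have "exp (- (- ln k)) \<le> exp (-b)" by simp
        then have kb: "k \<le> exp (-b)" using k0 by simp
        have "G x u (exp (-a)) \<le> G x u (exp (-b))"
          using ab r01[of a] r01[of b] kb rle[of a b] unfolding k_def
          by (intro G_dec) auto
        then show "E a \<le> E b" unfolding Eeq .
      qed
    qed
    have m2: "monoe {c..} E" unfolding monoe_def
    proof (intro disjI2 ballI impI)
      fix a b :: real assume ab: "a \<in> {c..}" "b \<in> {c..}" "a \<le> b"
      then have "- ln k \<le> a" "1 \<le> a" "1 \<le> b" unfolding c_def by auto
      then have "exp (-a) \<le> exp (- (- ln k))" by simp
      then have ka: "exp (-a) \<le> k" using k0 by simp
      have "G x u (exp (-b)) \<le> G x u (exp (-a))"
        using ab r01[of a] r01[of b] ka rle[of a b] \<open>1 \<le> a\<close> \<open>1 \<le> b\<close> unfolding k_def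
        by (intro G_inc) auto
      then show "E b \<le> E a" unfolding Eeq .
    qed
    show ?thesis using m1 m2 by (intro exI[of _ c]) (auto simp: c_def)
  qed
qed


lemma exp_m2_le: "exp (-2::real) \<le> 1/3"
proof -
  have "3 \<le> exp (2::real)" using exp_ge_add_one_self[of 2] by simp
  then have "inverse (exp (2::real)) \<le> inverse 3" by (intro le_imp_inverse_le) auto
  then show ?thesis by (simp add: exp_minus inverse_eq_divide)
qed

lemma Af_bounds:
  assumes "1 \<le> (t::real)"
  shows "1 \<le> 1 / sqrt (1 - exp (-2 * t)) \<and> 1 / sqrt (1 - exp (-2 * t)) \<le> 2"
proof -
  have "exp (-2 * t) \<le> exp (-2)" using assms by simp
  then have a: "exp (-2 * t) \<le> 1/3" using exp_m2_le by linarith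
  have b: "0 < exp (-2 * t)" by simp
  have s1: "sqrt (1 - exp (-2 * t)) \<le> 1" using b by simp
  have s0: "0 < sqrt (1 - exp (-2 * t))" using a assms by simp
  have "sqrt (1/4) \<le> sqrt (1 - exp (-2 * t))" using a by (intro real_sqrt_le_mono) simp
  moreover have "sqrt (1/4::real) = 1/2" by (simp add: real_sqrt_divide)
  ultimately have s2: "1/2 \<le> sqrt (1 - exp (-2 * t))" by simp
  show ?thesis using s0 s1 s2 by (simp add: field_simps)
qed

lemma Af_anti:
  assumes "1 \<le> (a::real)" "a \<le> b"
  shows "1 / sqrt (1 - exp (-2 * b)) \<le> 1 / sqrt (1 - exp (-2 * a))"
proof -
  have "exp (-2 * a) < 1" using assms by simp
  then have p: "0 < sqrt (1 - exp (-2 * a))" by simp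
  have "sqrt (1 - exp (-2 * a)) \<le> sqrt (1 - exp (-2 * b))" using assms by (intro real_sqrt_le_mono) simp
  then show ?thesis using p by (intro divide_left_mono) auto
qed

lemma Ef_bounds:
  assumes "1 \<le> (t::real)"
  shows "0 \<le> exp (- (1/2) * (exp (-t) * u - x)^2 / (1 - exp (-2 * t))) \<and>
         exp (- (1/2) * (exp (-t) * u - x)^2 / (1 - exp (-2 * t))) \<le> 1"
proof -
  have "exp (-2 * t) < 1" using assms by simp
  then have "0 < 1 - exp (-2 * t)" by simp
  then have "- (1/2) * (exp (-t) * u - x)^2 / (1 - exp (-2 * t)) \<le> 0"
    by (intro divide_nonpos_pos) auto
  then show ?thesis by simp
qed

lemma K_tv:
  fixes t :: "nat \<Rightarrow> real"
  assumes tS: "\<forall>i\<le>n. t i \<in> {1..}" and inc: "\<forall>i<n. t i < t (Suc i)"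
  shows "(\<Sum>i\<in>{1..n}. \<bar>K (t i) x u - K (t (i-1)) x u\<bar>) \<le> 5 * exp (R x)"
proof -
  define A where "A = (\<lambda>t::real. 1 / sqrt (1 - exp (-2 * t)))"
  define E where "E = (\<lambda>t. exp (- (1/2) * (exp (-t) * u - x)^2 / (1 - exp (-2 * t))))"
  have Keq: "K s x u = exp (R x) * (A s * E s)" for s unfolding K_def A_def E_def by simp
  have bA: "\<forall>a\<in>{1..}. 1 \<le> A a \<and> A a \<le> 2" unfolding A_def using Af_bounds by auto
  have bE: "\<forall>a\<in>{1..}. 0 \<le> E a \<and> E a \<le> 1" unfolding E_def using Ef_bounds by auto
  have mA: "monoe {1..} (\<lambda>s. A s - 1)" unfolding monoe_def A_def using Af_anti by auto
  have bA1: "\<forall>a\<in>{1..}. 0 \<le> A a - 1 \<and> A a - 1 \<le> 1" using bA by auto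
  have "(\<Sum>i\<in>{1..n}. \<bar>A (t i) - A (t (i-1))\<bar>) = (\<Sum>i\<in>{1..n}. \<bar>(A (t i) - 1) - (A (t (i-1)) - 1)\<bar>)"
    by simp
  also have "\<dots> \<le> 1" using tv_monoe[OF mA bA1 tS inc] by simp
  finally have vA: "(\<Sum>i\<in>{1..n}. \<bar>A (t i) - A (t (i-1))\<bar>) \<le> 1" .
  obtain c where c: "1 \<le> c" "monoe {1..c} E" "monoe {c..} E"
    using E_pieces[of u x] unfolding E_def by blast
  have vE: "(\<Sum>i\<in>{1..n}. \<bar>E (t i) - E (t (i-1))\<bar>) \<le> 2"
    by (rule tv_split[OF c bE tS inc])
  have v: "(\<Sum>i\<in>{1..n}. \<bar>A (t i) * E (t i) - A (t (i-1)) * E (t (i-1))\<bar>) \<le> 5"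
    by (rule tv_prod[OF bA bE tS vA vE])
  have "(\<Sum>i\<in>{1..n}. \<bar>K (t i) x u - K (t (i-1)) x u\<bar>) =
        exp (R x) * (\<Sum>i\<in>{1..n}. \<bar>A (t i) * E (t i) - A (t (i-1)) * E (t (i-1))\<bar>)"
    unfolding Keq sum_distrib_left
    by (intro sum.cong refl) (simp add: right_diff_distrib[symmetric] abs_mult)
  also have "\<dots> \<le> exp (R x) * 5" using v by (intro mult_left_mono) auto
  finally show ?thesis by simp
qed


lemma K_meas: "(\<lambda>u. K t x u) \<in> borel_measurable gamma_inf"
  unfolding gamma_inf_def K_def by simp

lemma K_bound:
  assumes "1 \<le> t" shows "\<bar>K t x u\<bar> \<le> 2 * exp (R x)"
proof -
  have a: "1 \<le> 1 / sqrt (1 - exp (-2 * t)) \<and> 1 / sqrt (1 - exp (-2 * t)) \<le> 2" by (rule Af_bounds[OF assms])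
  have e: "0 \<le> exp (- (1/2) * (exp (-t) * u - x)^2 / (1 - exp (-2 * t))) \<and>
         exp (- (1/2) * (exp (-t) * u - x)^2 / (1 - exp (-2 * t))) \<le> 1" by (rule Ef_bounds[OF assms])
  have "\<bar>K t x u\<bar> = exp (R x) * ((1 / sqrt (1 - exp (-2 * t))) * exp (- (1/2) * (exp (-t) * u - x)^2 / (1 - exp (-2 * t))))"
    using a e assms unfolding K_def by (simp add: abs_mult)
  also have "\<dots> \<le> exp (R x) * (2 * 1)"
    using a e by (intro mult_left_mono mult_mono) auto
  finally show ?thesis by simp
qed

lemma fK_integrable:
  assumes f: "integrable gamma_inf f" and t: "1 \<le> t"
  shows "integrable gamma_inf (\<lambda>u. f u * K t x u)"
proof -
  have i: "integrable gamma_inf (\<lambda>u. 2 * exp (R x) * f u)" using f by simp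
  have m: "(\<lambda>u. f u * K t x u) \<in> borel_measurable gamma_inf"
    using f K_meas by (intro borel_measurable_times) auto
  have a: "AE u in gamma_inf. norm (f u * K t x u) \<le> norm (2 * exp (R x) * f u)"
  proof (intro AE_I2)
    fix u
    have "\<bar>f u\<bar> * \<bar>K t x u\<bar> \<le> \<bar>f u\<bar> * (2 * exp (R x))" using K_bound[OF t] by (intro mult_left_mono) auto
    then show "norm (f u * K t x u) \<le> norm (2 * exp (R x) * f u)" by (simp add: abs_mult ac_simps)
  qed
  show ?thesis by (rule Bochner_Integration.integrable_bound[OF i m a])
qed

lemma H_partition:
  fixes t :: "nat \<Rightarrow> real"
  assumes f: "integrable gamma_inf f"
    and tS: "\<forall>i\<le>n. t i \<in> {1..}" and inc: "\<forall>i<n. t i < t (Suc i)"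
  shows "(\<Sum>i\<in>{1..n}. \<bar>H (t i) f x - H (t (i-1)) f x\<bar>) \<le> 5 * exp (R x) * (\<integral>u. \<bar>f u\<bar> \<partial>gamma_inf)"
proof -
  define g where "g = (\<lambda>i u. f u * K (t i) x u)"
  have gi: "integrable gamma_inf (g i)" if "i \<le> n" for i
    unfolding g_def using tS that by (intro fK_integrable[OF f]) auto
  have gd: "integrable gamma_inf (\<lambda>u. \<bar>g i u - g (i-1) u\<bar>)" if "i \<in> {1..n}" for i
    using gi[of i] gi[of "i-1"] that by auto
  have "(\<Sum>i\<in>{1..n}. \<bar>H (t i) f x - H (t (i-1)) f x\<bar>) \<le> (\<Sum>i\<in>{1..n}. \<integral>u. \<bar>g i u - g (i-1) u\<bar> \<partial>gamma_inf)"
  proof (intro sum_mono)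
    fix i assume i: "i \<in> {1..n}"
    have gi1: "integrable gamma_inf (g i)" "integrable gamma_inf (g (i-1))" using gi[of i] gi[of "i-1"] i by auto
    have "H (t i) f x - H (t (i-1)) f x = (\<integral>u. g i u - g (i-1) u \<partial>gamma_inf)"
      unfolding H_def using gi1 unfolding g_def by simp
    also have "\<bar>\<dots>\<bar> \<le> (\<integral>u. \<bar>g i u - g (i-1) u\<bar> \<partial>gamma_inf)"
      using gi[of i] gi[of "i-1"] gd[OF i] i by (intro integral_abs_bound_integral) auto
    finally show "\<bar>H (t i) f x - H (t (i-1)) f x\<bar> \<le> (\<integral>u. \<bar>g i u - g (i-1) u\<bar> \<partial>gamma_inf)" .
  qed
  also have "\<dots> = (\<integral>u. (\<Sum>i\<in>{1..n}. \<bar>g i u - g (i-1) u\<bar>) \<partial>gamma_inf)"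
    using gd by (intro Bochner_Integration.integral_sum[where I="{1..n}" and M=gamma_inf and f="\<lambda>i u. \<bar>g i u - g (i-1) u\<bar>", symmetric]) auto
  also have "\<dots> \<le> (\<integral>u. 5 * exp (R x) * \<bar>f u\<bar> \<partial>gamma_inf)"
  proof (intro integral_mono)
    show "integrable gamma_inf (\<lambda>u. \<Sum>i\<in>{1..n}. \<bar>g i u - g (i-1) u\<bar>)" using gd by auto
    show "integrable gamma_inf (\<lambda>u. 5 * exp (R x) * \<bar>f u\<bar>)" using f by auto
    fix u
    have "(\<Sum>i\<in>{1..n}. \<bar>g i u - g (i-1) u\<bar>) = \<bar>f u\<bar> * (\<Sum>i\<in>{1..n}. \<bar>K (t i) x u - K (t (i-1)) x u\<bar>)"
      unfolding g_def sum_distrib_left by (intro sum.cong refl) (simp add: right_diff_distrib[symmetric] abs_mult)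
    also have "\<dots> \<le> \<bar>f u\<bar> * (5 * exp (R x))" using K_tv[OF tS inc, of x u] by (intro mult_left_mono) auto
    finally show "(\<Sum>i\<in>{1..n}. \<bar>g i u - g (i-1) u\<bar>) \<le> 5 * exp (R x) * \<bar>f u\<bar>" by (simp add: ac_simps)
  qed
  also have "\<dots> = 5 * exp (R x) * (\<integral>u. \<bar>f u\<bar> \<partial>gamma_inf)" by simp
  finally show ?thesis .
qed

lemma H_var:
  fixes \<rho> :: real
  assumes f: "integrable gamma_inf f" and r: "1 \<le> \<rho>"
  shows "var_norm \<rho> {1..} (\<lambda>t. H t f x) \<le> ereal (5 * exp (R x) * (\<integral>u. \<bar>f u\<bar> \<partial>gamma_inf))"
  unfolding var_norm_def
proof (intro SUP_least)
  fix p :: "nat \<times> (nat \<Rightarrow> real)" assume "p \<in> {(n, t). (\<forall>i\<le>n. t i \<in> {1..}) \<and> (\<forall>i<n. t i < t (Suc i))}"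
  then obtain n and t :: "nat \<Rightarrow> real" where p: "p = (n, t)" and tS: "\<forall>i\<le>n. t i \<in> {1..}" and inc: "\<forall>i<n. t i < t (Suc i)"
    by auto
  have "(\<Sum>i\<in>{1..n}. \<bar>H (t i) f x - H (t (i-1)) f x\<bar> powr \<rho>) powr (1/\<rho>) \<le> (\<Sum>i\<in>{1..n}. \<bar>H (t i) f x - H (t (i-1)) f x\<bar>)"
    by (rule powr_sum_le[OF r]) auto
  also have "\<dots> \<le> 5 * exp (R x) * (\<integral>u. \<bar>f u\<bar> \<partial>gamma_inf)" by (rule H_partition[OF f tS inc])
  finally show "ereal ((\<Sum>i\<in>{1..fst p}. \<bar>H (snd p i) f x - H (snd p (i - 1)) f x\<bar> powr \<rho>) powr (1 / \<rho>))
         \<le> ereal (5 * exp (R x) * (\<integral>u. \<bar>f u\<bar> \<partial>gamma_inf))" unfolding p by simp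
qed



lemma FTC_tail:
  assumes s: "0 < s"
  shows "(\<integral>\<^sup>+x. ennreal (x * exp (-x\<^sup>2/2)) * indicator {s..} x \<partial>lborel) = ennreal (exp (-s\<^sup>2/2))"
proof -
  have "(\<integral>\<^sup>+x. ennreal (x * exp (-x\<^sup>2/2)) * indicator {s..} x \<partial>lborel) = ennreal (0 - (- exp (-s\<^sup>2/2)))"
  proof (rule nn_integral_FTC_atLeast)
    show "((\<lambda>x::real. - exp (-x\<^sup>2/2)) \<longlongrightarrow> 0) at_top" by real_asymp
    show "(\<lambda>x::real. x * exp (-x\<^sup>2/2)) \<in> borel_measurable borel" by measurable
    fix x :: real assume x: "s \<le> x"
    show "0 \<le> x * exp (-x\<^sup>2/2)" using x s by simp
    show "((\<lambda>x. - exp (-x\<^sup>2/2)) has_real_derivative x * exp (-x\<^sup>2/2)) (at x)"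
      by (rule derivative_eq_intros refl | simp)+
  qed
  then show ?thesis by simp
qed


lemma c_bound: "0 \<le> (2*pi) powr (-1/2) \<and> (2*pi) powr (-1/2) \<le> (1/2::real)"
proof -
  have "(2*pi) powr (-1/2) = inverse ((2*pi) powr (1/2))"
    by (simp add: powr_minus[symmetric])
  also have "\<dots> = inverse (sqrt (2*pi))" by (simp add: powr_half_sqrt)
  finally have e: "(2*pi) powr (-1/2) = inverse (sqrt (2*pi))" .
  have "sqrt 4 \<le> sqrt (2*pi)" using pi_gt3 by (intro real_sqrt_le_mono) simp
  then have "2 \<le> sqrt (2*pi)" by simp
  then have "inverse (sqrt (2*pi)) \<le> inverse 2" by (intro le_imp_inverse_le) auto
  then show ?thesis unfolding e by simp
qed

lemma tail:
  assumes s: "0 < s"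
  shows "emeasure gamma_inf {x. s < \<bar>x\<bar>} \<le> ennreal (exp (-s\<^sup>2/2) / s)"
proof -
  define c :: real where "c = (2*pi) powr (-1/2)"
  have c: "0 \<le> c" "c \<le> 1/2" using c_bound unfolding c_def by auto
  define F where "F = (\<lambda>x::real. ennreal (x * exp (-x\<^sup>2/2)) * indicator {s..} x)"
  have Fm: "F \<in> borel_measurable borel" unfolding F_def by measurable
  have B: "{x::real. s < \<bar>x\<bar>} \<in> sets borel" by measurable
  have "emeasure gamma_inf {x. s < \<bar>x\<bar>} = (\<integral>\<^sup>+x. ennreal (c * exp (- R x)) * indicator {x. s < \<bar>x\<bar>} x \<partial>lborel)"
  proof -
    have fm: "(\<lambda>u. ennreal ((2*pi) powr (-1/2) * exp (- R u))) \<in> borel_measurable lborel"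
      unfolding R_def by measurable
    have B': "{x::real. s < \<bar>x\<bar>} \<in> sets lborel" using B by simp
    show ?thesis unfolding gamma_inf_def c_def by (rule emeasure_density[OF fm B'])
  qed
  also have "\<dots> \<le> (\<integral>\<^sup>+x. ennreal (c/s) * F x + ennreal (c/s) * F (-x) \<partial>lborel)"
  proof (intro nn_integral_mono)
    fix x :: real
    have h: "exp (- R x) = exp (-x\<^sup>2/2)" unfolding R_def by simp
    consider "s < x" | "x < -s" | "\<bar>x\<bar> \<le> s" by linarith
    then show "ennreal (c * exp (- R x)) * indicator {x. s < \<bar>x\<bar>} x \<le> ennreal (c/s) * F x + ennreal (c/s) * F (-x)"
    proof cases
      case 1
      have "c * exp (-x\<^sup>2/2) * 1 \<le> c * exp (-x\<^sup>2/2) * (x/s)"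
        using 1 s c by (intro mult_left_mono) auto
      then have le: "c * exp (-x\<^sup>2/2) \<le> (c/s) * (x * exp (-x\<^sup>2/2))" by (simp add: field_simps)
      have eq: "ennreal (c/s) * ennreal (x * exp (-x\<^sup>2/2)) = ennreal ((c/s) * (x * exp (-x\<^sup>2/2)))"
        using 1 s c by (intro ennreal_mult[symmetric]) auto
      have i1: "indicator {x. s < \<bar>x\<bar>} x = (1::ennreal)" "indicator {s..} x = (1::ennreal)" "indicator {s..} (-x) = (0::ennreal)"
        using 1 s by (auto simp: indicator_def)
      show ?thesis unfolding F_def h i1 using ennreal_leI[OF le] eq by simp
    next
      case 2
      have xs: "1 \<le> -x/s" using 2 s by (simp add: field_simps)
      have "c * exp (-x\<^sup>2/2) * 1 \<le> c * exp (-x\<^sup>2/2) * (-x/s)"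
        using xs c by (intro mult_left_mono) auto
      then have le: "c * exp (-x\<^sup>2/2) \<le> (c/s) * (-x * exp (-(-x)\<^sup>2/2))" by (simp add: field_simps)
      have eq: "ennreal (c/s) * ennreal (-x * exp (-(-x)\<^sup>2/2)) = ennreal ((c/s) * (-x * exp (-(-x)\<^sup>2/2)))"
        using 2 s c by (intro ennreal_mult[symmetric]) (auto intro: mult_nonpos_nonneg)
      have i1: "indicator {x. s < \<bar>x\<bar>} x = (1::ennreal)" "indicator {s..} x = (0::ennreal)" "indicator {s..} (-x) = (1::ennreal)"
        using 2 s by (auto simp: indicator_def)
      show ?thesis unfolding F_def h i1 using ennreal_leI[OF le] eq by simp
    next
      case 3
      then have "indicator {x. s < \<bar>x\<bar>} x = (0::ennreal)" by (auto simp: indicator_def)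
      then show ?thesis by simp
    qed
  qed
  also have "\<dots> = ennreal (c/s) * (\<integral>\<^sup>+x. F x \<partial>lborel) + ennreal (c/s) * (\<integral>\<^sup>+x. F (-x) \<partial>lborel)"
    using Fm by (simp add: nn_integral_add nn_integral_cmult)
  also have "(\<integral>\<^sup>+x. F (-x) \<partial>lborel) = (\<integral>\<^sup>+x. F x \<partial>lborel)"
    using nn_integral_real_affine[OF Fm, of "-1" 0] by simp
  also have "(\<integral>\<^sup>+x. F x \<partial>lborel) = ennreal (exp (-s\<^sup>2/2))"
    unfolding F_def by (rule FTC_tail[OF s])
  also have "ennreal (c/s) * ennreal (exp (-s\<^sup>2/2)) + ennreal (c/s) * ennreal (exp (-s\<^sup>2/2))
      = ennreal (2 * c * exp (-s\<^sup>2/2) / s)"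
  proof -
    have "ennreal (c/s) * ennreal (exp (-s\<^sup>2/2)) = ennreal (c * exp (-s\<^sup>2/2) / s)"
      using c s by (subst ennreal_mult[symmetric]) auto
    moreover have "ennreal (c * exp (-s\<^sup>2/2) / s) + ennreal (c * exp (-s\<^sup>2/2) / s) = ennreal (2 * c * exp (-s\<^sup>2/2) / s)"
      using c s by (subst ennreal_plus[symmetric]) auto
    ultimately show ?thesis by simp
  qed
  also have "\<dots> \<le> ennreal (exp (-s\<^sup>2/2) / s)"
  proof (intro ennreal_leI)
    have "2 * c * exp (-s\<^sup>2/2) \<le> 1 * exp (-s\<^sup>2/2)" using c by (intro mult_right_mono) auto
    then show "2 * c * exp (-s\<^sup>2/2) / s \<le> exp (-s\<^sup>2/2) / s" using s by (simp add: divide_right_mono)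
  qed
  finally show ?thesis .
qed



lemma c_eq: "(2*pi) powr (-1/2) = 1 / sqrt (2*pi)"
proof -
  have "(2*pi) powr (-1/2) = inverse ((2*pi) powr (1/2))"
    by (simp add: powr_minus[symmetric])
  also have "\<dots> = inverse (sqrt (2*pi))" by (simp add: powr_half_sqrt)
  finally show ?thesis by (simp add: inverse_eq_divide)
qed

lemma gamma_prob: "prob_space gamma_inf"
proof -
  have e: "(2*pi) powr (- (1/2)) = 1/sqrt(2*pi)" using c_eq by simp
  have "gamma_inf = density lborel (normal_density 0 1)"
    unfolding gamma_inf_def
    by (intro arg_cong[where f="density lborel"] ext) (simp add: normal_density_def e R_def)
  then show ?thesis using prob_space_normal_density[of 1 0] by simp
qed

lemma meas_le_1: "measure gamma_inf A \<le> 1"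
  using prob_space.prob_le_1[OF gamma_prob] .


lemma meas_tail:
  fixes \<beta> :: real
  assumes b: "1 < \<beta>"
  shows "measure gamma_inf {x. \<beta> < exp (R x)} \<le> 1 / (\<beta> * sqrt (2 * ln \<beta>))"
proof -
  define s where "s = sqrt (2 * ln \<beta>)"
  have lp: "0 < ln \<beta>" using b by simp
  have s0: "0 < s" unfolding s_def using lp by simp
  have seq: "{x. \<beta> < exp (R x)} = {x. s < \<bar>x\<bar>}"
  proof (intro Collect_cong)
    fix x :: real
    have "\<beta> < exp (R x) \<longleftrightarrow> ln \<beta> < ln (exp (R x))" using b by (subst ln_less_cancel_iff) auto
    also have "\<dots> \<longleftrightarrow> 2 * ln \<beta> < x\<^sup>2" unfolding R_def ln_exp by linarith
    also have "\<dots> \<longleftrightarrow> sqrt (2 * ln \<beta>) < sqrt (x\<^sup>2)" by (simp only: real_sqrt_less_iff)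
    also have "\<dots> \<longleftrightarrow> s < \<bar>x\<bar>" unfolding s_def by simp
    finally show "\<beta> < exp (R x) \<longleftrightarrow> s < \<bar>x\<bar>" .
  qed
  have "s\<^sup>2 = 2 * ln \<beta>" unfolding s_def using lp by simp
  then have es: "exp (-s\<^sup>2/2) = 1 / \<beta>" using b by (simp add: exp_minus exp_ln inverse_eq_divide)
  have "emeasure gamma_inf {x. \<beta> < exp (R x)} \<le> ennreal (exp (-s\<^sup>2/2) / s)"
    unfolding seq by (rule tail[OF s0])
  then have m: "measure gamma_inf {x. \<beta> < exp (R x)} \<le> exp (-s\<^sup>2/2) / s"
    unfolding measure_def using s0 by (intro enn2real_leI) auto
  have m2: "measure gamma_inf {x. \<beta> < exp (R x)} \<le> (1 / \<beta>) / s" using m unfolding es .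
  show ?thesis using m2 unfolding s_def by (simp add: divide_divide_eq_left)
qed

lemma A_sets: "{x. \<alpha> < 5 * exp (R x) * N} \<in> sets gamma_inf"
proof -
  have "{x::real. \<alpha> < 5 * exp (R x) * N} \<in> sets borel" unfolding R_def by measurable
  then show ?thesis unfolding gamma_inf_def by simp
qed

lemma var_sub:
  fixes \<rho> :: real
  assumes f: "integrable gamma_inf f" and r: "1 \<le> \<rho>"
  shows "{x. var_norm \<rho> {1..} (\<lambda>t. H t f x) > ereal \<alpha>} \<subseteq> {x. \<alpha> < 5 * exp (R x) * (\<integral>u. \<bar>f u\<bar> \<partial>gamma_inf)}"
proof
  fix x assume "x \<in> {x. var_norm \<rho> {1..} (\<lambda>t. H t f x) > ereal \<alpha>}"
  then have "ereal \<alpha> < var_norm \<rho> {1..} (\<lambda>t. H t f x)" by simp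
  also have "\<dots> \<le> ereal (5 * exp (R x) * (\<integral>u. \<bar>f u\<bar> \<partial>gamma_inf))" by (rule H_var[OF f r])
  finally show "x \<in> {x. \<alpha> < 5 * exp (R x) * (\<integral>u. \<bar>f u\<bar> \<partial>gamma_inf)}" by simp
qed

lemma level_part1:
  fixes N \<alpha> :: real
  assumes N: "0 \<le> N" and a: "0 < \<alpha>"
  shows "measure gamma_inf {x. \<alpha> < 5 * exp (R x) * N} \<le> (5 * exp 1) * N / \<alpha>"
proof (cases "N = 0")
  case True
  then have "{x. \<alpha> < 5 * exp (R x) * N} = {}" using a by auto
  then show ?thesis using True by simp
next
  case False
  then have N0: "0 < N" using N by simp
  define \<beta> where "\<beta> = \<alpha> / (5 * N)"
  have b0: "0 < \<beta>" unfolding \<beta>_def using a N0 by simp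
  have seq: "{x. \<alpha> < 5 * exp (R x) * N} = {x. \<beta> < exp (R x)}"
    unfolding \<beta>_def using N0 by (simp add: field_simps)
  have rhs: "(5 * exp 1) * N / \<alpha> = exp 1 / \<beta>" unfolding \<beta>_def using N0 a by (simp add: field_simps)
  show ?thesis
  proof (cases "\<beta> \<le> exp 1")
    case True
    have "1 \<le> exp 1 / \<beta>" using True b0 by (simp add: field_simps)
    then show ?thesis unfolding rhs using meas_le_1[of "{x. \<alpha> < 5 * exp (R x) * N}"] by linarith
  next
    case False
    then have b1: "1 < \<beta>" using one_less_exp_iff[of 1] by linarith
    have "ln (exp 1) < ln \<beta>" using False b0 by (subst ln_less_cancel_iff) auto
    then have "1 < ln \<beta>" by simp
    then have "1 \<le> sqrt (2 * ln \<beta>)" by simp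
    then have "\<beta> * 1 \<le> \<beta> * sqrt (2 * ln \<beta>)" using b0 by (intro mult_left_mono) auto
    moreover have "0 < \<beta> * sqrt (2 * ln \<beta>)" using b1 \<open>1 < ln \<beta>\<close> by (intro mult_pos_pos) auto
    ultimately have "1 / (\<beta> * sqrt (2 * ln \<beta>)) \<le> 1 / \<beta>" using b0 by (intro divide_left_mono) (auto intro: mult_pos_pos)
    also have "\<dots> \<le> exp 1 / \<beta>" using b0 by (intro divide_right_mono) auto
    finally show ?thesis unfolding rhs seq using meas_tail[OF b1] by linarith
  qed
qed

lemma level_part2:
  fixes \<alpha> :: real
  assumes a: "2 < \<alpha>"
  shows "measure gamma_inf {x. \<alpha> < 5 * exp (R x) * 1} \<le> 125 / (\<alpha> * sqrt (ln \<alpha>))"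
proof -
  have la: "0 < ln \<alpha>" using a by simp
  have den: "0 < \<alpha> * sqrt (ln \<alpha>)" using a la by simp
  show ?thesis
  proof (cases "\<alpha> \<le> 25")
    case True
    have "ln \<alpha> \<le> \<alpha> - 1" using a by (intro ln_le_minus_one) auto
    then have "ln \<alpha> \<le> 25" using True by linarith
    then have "sqrt (ln \<alpha>) \<le> sqrt 25" by (intro real_sqrt_le_mono)
    then have "sqrt (ln \<alpha>) \<le> 5" by simp
    then have "\<alpha> * sqrt (ln \<alpha>) \<le> 25 * 5" using True a by (intro mult_mono) auto
    then have "1 \<le> 125 / (\<alpha> * sqrt (ln \<alpha>))" using den by (simp add: field_simps)
    then show ?thesis using meas_le_1[of "{x. \<alpha> < 5 * exp (R x) * 1}"] by linarith
  next
    case False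
    define \<beta> where "\<beta> = \<alpha> / 5"
    have b1: "1 < \<beta>" unfolding \<beta>_def using False by simp
    have seq: "{x. \<alpha> < 5 * exp (R x) * 1} = {x. \<beta> < exp (R x)}"
      unfolding \<beta>_def by (auto simp: field_simps)
    have "ln \<beta> = ln \<alpha> - ln 5" unfolding \<beta>_def using a by (simp add: ln_div)
    moreover have "ln 25 \<le> ln \<alpha>" using False by simp
    moreover have "ln (25::real) = 2 * ln 5"
    proof -
      have "ln (25::real) = ln (5 * 5)" by simp
      also have "\<dots> = ln 5 + ln 5" by (subst ln_mult) auto
      finally show ?thesis by simp
    qed
    ultimately have "ln \<alpha> \<le> 2 * ln \<beta>" by linarith
    then have sq: "sqrt (ln \<alpha>) \<le> sqrt (2 * ln \<beta>)" by (intro real_sqrt_le_mono)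
    have sp: "0 < sqrt (ln \<alpha>)" using la by simp
    have "\<beta> * sqrt (ln \<alpha>) \<le> \<beta> * sqrt (2 * ln \<beta>)" using sq b1 by (intro mult_left_mono) auto
    then have "1 / (\<beta> * sqrt (2 * ln \<beta>)) \<le> 1 / (\<beta> * sqrt (ln \<alpha>))"
      using b1 sp by (intro divide_left_mono) auto
    also have "1 / (\<beta> * sqrt (ln \<alpha>)) = 5 / (\<alpha> * sqrt (ln \<alpha>))" unfolding \<beta>_def by (simp add: field_simps)
    also have "\<dots> \<le> 125 / (\<alpha> * sqrt (ln \<alpha>))" using den by (intro divide_right_mono) auto
    finally show ?thesis unfolding seq using meas_tail[OF b1] by linarith
  qed
qed

theorem proposition3p1:
  fixes \<rho> :: real
  assumes "\<rho> > 2"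
  shows "(\<exists>C. \<forall>f. integrable gamma_inf f \<longrightarrow> (\<forall>\<alpha>>0.
            \<exists>A \<in> sets gamma_inf.
              {x. var_norm \<rho> {1..} (\<lambda>t. H t f x) > ereal \<alpha>} \<subseteq> A \<and>
              measure gamma_inf A \<le> C * (\<integral>u. \<bar>f u\<bar> \<partial>gamma_inf) / \<alpha>))
       \<and> (\<exists>C. \<forall>f. integrable gamma_inf f \<and> (\<integral>u. \<bar>f u\<bar> \<partial>gamma_inf) = 1 \<longrightarrow> (\<forall>\<alpha>>2.
            \<exists>A \<in> sets gamma_inf.
              {x. var_norm \<rho> {1..} (\<lambda>t. H t f x) > ereal \<alpha>} \<subseteq> A \<and>
              measure gamma_inf A \<le> C / (\<alpha> * sqrt (ln \<alpha>))))"
proof (intro conjI)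
  have r: "1 \<le> \<rho>" using assms by simp
  show "\<exists>C. \<forall>f. integrable gamma_inf f \<longrightarrow> (\<forall>\<alpha>>0.
            \<exists>A \<in> sets gamma_inf.
              {x. var_norm \<rho> {1..} (\<lambda>t. H t f x) > ereal \<alpha>} \<subseteq> A \<and>
              measure gamma_inf A \<le> C * (\<integral>u. \<bar>f u\<bar> \<partial>gamma_inf) / \<alpha>)"
  proof (intro exI allI impI ballI bexI conjI)
    fix f :: "real \<Rightarrow> real" and \<alpha> :: real
    assume f: "integrable gamma_inf f" and a: "\<alpha> > 0"
    let ?N = "\<integral>u. \<bar>f u\<bar> \<partial>gamma_inf"
    show "{x. \<alpha> < 5 * exp (R x) * ?N} \<in> sets gamma_inf" by (rule A_sets)
    show "{x. var_norm \<rho> {1..} (\<lambda>t. H t f x) > ereal \<alpha>} \<subseteq> {x. \<alpha> < 5 * exp (R x) * ?N}"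
      by (rule var_sub[OF f r])
    show "measure gamma_inf {x. \<alpha> < 5 * exp (R x) * ?N} \<le> (5 * exp 1) * ?N / \<alpha>"
      using a by (intro level_part1) auto
  qed
  show "\<exists>C. \<forall>f. integrable gamma_inf f \<and> (\<integral>u. \<bar>f u\<bar> \<partial>gamma_inf) = 1 \<longrightarrow> (\<forall>\<alpha>>2.
            \<exists>A \<in> sets gamma_inf.
              {x. var_norm \<rho> {1..} (\<lambda>t. H t f x) > ereal \<alpha>} \<subseteq> A \<and>
              measure gamma_inf A \<le> C / (\<alpha> * sqrt (ln \<alpha>)))"
  proof (intro exI allI impI ballI bexI conjI)
    fix f :: "real \<Rightarrow> real" and \<alpha> :: real
    assume fN: "integrable gamma_inf f \<and> (\<integral>u. \<bar>f u\<bar> \<partial>gamma_inf) = 1" and a: "\<alpha> > 2"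
    then have f: "integrable gamma_inf f" and N: "(\<integral>u. \<bar>f u\<bar> \<partial>gamma_inf) = 1" by auto
    show "{x. \<alpha> < 5 * exp (R x) * 1} \<in> sets gamma_inf" by (rule A_sets)
    show "{x. var_norm \<rho> {1..} (\<lambda>t. H t f x) > ereal \<alpha>} \<subseteq> {x. \<alpha> < 5 * exp (R x) * 1}"
      using var_sub[OF f r, of \<alpha>] unfolding N .
    show "measure gamma_inf {x. \<alpha> < 5 * exp (R x) * 1} \<le> 125 / (\<alpha> * sqrt (ln \<alpha>))"
      using a by (rule level_part2)
  qed
qed

end
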